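(* For a pyramid $\mathcal P$, the following are equivalent: (i) the observable diameter of $\mathcal P$ is finite; (ii) $t\mathcal P$ converges weakly to $\{*\}$ as $t\to0+$.
   Context: An mm-space is a triple $(X,d_X,\mu_X)$ with $(X,d_X)$ complete separable metric and $\mu_X$ a Borel probability measure; $\mathcal X$ is the set of mm-isomorphism classes; $*$ is the one-point mm-space. $Y\prec X$ means there is a 1-Lipschitz $f:X\to Y$ with $f_*\mu_X=\mu_Y$. The box distance $\square(X,Y)$ is the infimum of $\max\{\operatorname{dis}(S),1-\pi(S)\}$ over couplings $\pi$ of $\mu_X,\mu_Y$ and Borel $S\subset X\times Y$, $\operatorname{dis}(S)=\sup\{|d_X(x,x')-d_Y(y,y')|:(x,y),(x',y')\in S\}$. A pyramid is a nonempty box-closed subset of $\mathcal X$ closed downward under $\prec$ and directed. Pyramids $\mathcal P_k$ converge weakly to $\mathcal P$ if $\lim_k\inf_{Y\in\mathcal P_k}\square(X,Y)=0$ for all $X\in\mathcal P$ and $\liminf_k\inf_{Y\in\mathcal P_k}\square(X,Y)>0$ for all $X\notin\mathcal P$; convergence as $t\to0+$ means along every sequence $t_k\to0+$. For $t>0$, $tX=(X,td_X,\mu_X)$, $t\mathcal P=\{tX:X\in\mathcal P\}$. For $0<\kappa<1$: $\operatorname{diam}(\mu;1-\kappa)=\inf\{\operatorname{diam}A:A\text{ Borel},\mu(A)\ge1-\kappa\}$, $\operatorname{ObsDiam}(X;-\kappa)=\sup\{\operatorname{diam}(f_*\mu_X;1-\kappa):f:X\to\mathbb R\text{ 1-Lipschitz}\}$,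 $\operatorname{ObsDiam}(\mathcal P;-\kappa)=\sup_{X\in\mathcal P}\operatorname{ObsDiam}(X;-\kappa)$. The observable diameter of $\mathcal P$ is finite if $\operatorname{ObsDiam}(\mathcal P;-\kappa)<\infty$ for every $0<\kappa<1$. *)

theory Defs
  imports "HOL-Probability.Probability"
begin

text \<open>
  Every complete separable metric space has cardinality
  at most the continuum, hence is isometric to a metric space whose carrier is a subset
  of the reals.  We therefore represent an mm-space by a triple (X, d, mu) with
  X a set of reals, d a metric on X and mu a Borel probability measure on (X, d).
  The set of mm-isomorphism classes is represented by (isomorphism-invariant) sets of
  such triples; all notions below are invariant under mm-isomorphism.
\<close>

type_synonym mm = "real set \<times> (real \<Rightarrow> real \<Rightarrow> real) \<times> real measure"

definition mm_carrier :: "mm \<Rightarrow> real set" where "mm_carrier X = fst X"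
definition mm_dist :: "mm \<Rightarrow> real \<Rightarrow> real \<Rightarrow> real" where "mm_dist X = fst (snd X)"
definition mm_meas :: "mm \<Rightarrow> real measure" where "mm_meas X = snd (snd X)"

definition metric_borel :: "real set \<Rightarrow> (real \<Rightarrow> real \<Rightarrow> real) \<Rightarrow> real measure" where
  "metric_borel S d = sigma S {U. openin (Metric_space.mtopology S d) U}"

definition mm_space :: "mm \<Rightarrow> bool" where
  "mm_space X \<longleftrightarrow>
     Metric_space (mm_carrier X) (mm_dist X) \<and>
     Metric_space.mcomplete (mm_carrier X) (mm_dist X) \<and>
     separable_space (Metric_space.mtopology (mm_carrier X) (mm_dist X)) \<and>
     sets (mm_meas X) = sets (metric_borel (mm_carrier X) (mm_dist X)) \<and>
     prob_space (mm_meas X)"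

definition mm_star :: mm where
  "mm_star = ({0}, (\<lambda>x y. 0), return (metric_borel {0} (\<lambda>x y. 0)) 0)"

text \<open>Lipschitz order: mm_dominated Y X means Y \<prec> X, i.e. there is a
  1-Lipschitz map f : X \<rightarrow> Y with f_* mu_X = mu_Y.\<close>
definition mm_dominated :: "mm \<Rightarrow> mm \<Rightarrow> bool" where
  "mm_dominated Y X \<longleftrightarrow>
     (\<exists>f. f \<in> mm_carrier X \<rightarrow> mm_carrier Y \<and>
          (\<forall>x\<in>mm_carrier X. \<forall>x'\<in>mm_carrier X. mm_dist Y (f x) (f x') \<le> mm_dist X x x') \<and>
          f \<in> measurable (mm_meas X) (mm_meas Y) \<and>
          distr (mm_meas X) (mm_meas Y) f = mm_meas Y)"

definition couplings :: "real measure \<Rightarrow> real measure \<Rightarrow> (real \<times> real) measure set" where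
  "couplings mu nu = {pi. sets pi = sets (mu \<Otimes>\<^sub>M nu) \<and> prob_space pi \<and>
      distr pi mu fst = mu \<and> distr pi nu snd = nu}"

text \<open>Distortion of a set S \<subseteq> X \<times> Y (as an extended real; for empty S it is -\<infinity>,
  which does not affect the box distance since then 1 - pi(S) = 1).\<close>
definition distortion :: "mm \<Rightarrow> mm \<Rightarrow> (real \<times> real) set \<Rightarrow> ereal" where
  "distortion X Y S = (SUP p\<in>S. SUP q\<in>S.
      ereal \<bar>mm_dist X (fst p) (fst q) - mm_dist Y (snd p) (snd q)\<bar>)"

definition box_dist :: "mm \<Rightarrow> mm \<Rightarrow> ereal" where
  "box_dist X Y = (INF pi\<in>couplings (mm_meas X) (mm_meas Y).
      INF S\<in>sets (mm_meas X \<Otimes>\<^sub>M mm_meas Y).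
        max (distortion X Y S) (ereal (1 - measure pi S)))"

definition box_closed :: "mm set \<Rightarrow> bool" where
  "box_closed P \<longleftrightarrow> (\<forall>X. mm_space X \<and> (INF Y\<in>P. box_dist X Y) = 0 \<longrightarrow> X \<in> P)"

definition pyramid :: "mm set \<Rightarrow> bool" where
  "pyramid P \<longleftrightarrow> P \<noteq> {} \<and> P \<subseteq> {X. mm_space X} \<and> box_closed P \<and>
     (\<forall>X\<in>P. \<forall>Y. mm_space Y \<and> mm_dominated Y X \<longrightarrow> Y \<in> P) \<and>
     (\<forall>X\<in>P. \<forall>X'\<in>P. \<exists>Y\<in>P. mm_dominated X Y \<and> mm_dominated X' Y)"

text \<open>The pyramid {*}: all mm-spaces mm-isomorphic to the one-point space.\<close>
definition pyr_star :: "mm set" where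
  "pyr_star = {X. mm_space X \<and> mm_dominated X mm_star}"

definition pyr_weak_conv :: "(nat \<Rightarrow> mm set) \<Rightarrow> mm set \<Rightarrow> bool" where
  "pyr_weak_conv Ps P \<longleftrightarrow>
     (\<forall>X\<in>P. (\<lambda>k. INF Y\<in>Ps k. box_dist X Y) \<longlonglongrightarrow> 0) \<and>
     (\<forall>X. mm_space X \<and> X \<notin> P \<longrightarrow> liminf (\<lambda>k. INF Y\<in>Ps k. box_dist X Y) > 0)"

definition mm_scale :: "real \<Rightarrow> mm \<Rightarrow> mm" where
  "mm_scale t X = (mm_carrier X, (\<lambda>x y. t * mm_dist X x y), mm_meas X)"

definition pyr_scale :: "real \<Rightarrow> mm set \<Rightarrow> mm set" where
  "pyr_scale t P = mm_scale t ` P"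

definition partial_diam :: "real measure \<Rightarrow> real \<Rightarrow> ereal" where
  "partial_diam nu kappa = (INF A\<in>{A\<in>sets borel. measure nu A \<ge> 1 - kappa}.
      (SUP x\<in>A. SUP y\<in>A. ereal \<bar>x - y\<bar>))"

definition obs_diam :: "mm \<Rightarrow> real \<Rightarrow> ereal" where
  "obs_diam X kappa = (SUP f\<in>{f. \<forall>x\<in>mm_carrier X. \<forall>x'\<in>mm_carrier X.
        \<bar>f x - f x'\<bar> \<le> mm_dist X x x'}.
      partial_diam (distr (mm_meas X) borel f) kappa)"

definition obs_diam_pyr :: "mm set \<Rightarrow> real \<Rightarrow> ereal" where
  "obs_diam_pyr P kappa = (SUP X\<in>P. obs_diam X kappa)"

definition obs_diam_finite :: "mm set \<Rightarrow> bool" where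
  "obs_diam_finite P \<longleftrightarrow> (\<forall>kappa. 0 < kappa \<and> kappa < 1 \<longrightarrow> obs_diam_pyr P kappa < \<infinity>)"

end

theory Submission
  imports Defs
begin


lemma metric_borel_space:
  assumes "Metric_space S d" shows "space (metric_borel S d) = S"
proof -
  interpret Metric_space S d by fact
  have "{U. openin mtopology U} \<subseteq> Pow S" using openin_subset by fastforce
  then show ?thesis unfolding metric_borel_def by (simp add: space_measure_of_conv)
qed

lemma metric_borel_open:
  assumes "Metric_space S d" "openin (Metric_space.mtopology S d) U"
  shows "U \<in> sets (metric_borel S d)"
proof -
  interpret Metric_space S d by fact
  have "{U. openin mtopology U} \<subseteq> Pow S" using openin_subset by fastforce
  then show ?thesis unfolding metric_borel_def using assms(2)
    by (simp add: sets_measure_of_conv sigma_sets.Basic)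
qed

lemma mm_space_space:
  assumes "mm_space X" shows "space (mm_meas X) = mm_carrier X"
  using assms unfolding mm_space_def
  by (metis metric_borel_space sets_eq_imp_space_eq)

lemma mm_space_open:
  assumes "mm_space X" "openin (Metric_space.mtopology (mm_carrier X) (mm_dist X)) U"
  shows "U \<in> sets (mm_meas X)"
  using assms metric_borel_open unfolding mm_space_def by metis

lemma mm_space_prob: "mm_space X \<Longrightarrow> prob_space (mm_meas X)"
  unfolding mm_space_def by simp

lemma mm_space_metric: "mm_space X \<Longrightarrow> Metric_space (mm_carrier X) (mm_dist X)"
  unfolding mm_space_def by simp

lemma lip_meas:
  assumes X: "mm_space X"
    and lip: "\<And>x y. x \<in> mm_carrier X \<Longrightarrow> y \<in> mm_carrier X \<Longrightarrow> \<bar>h x - h y\<bar> \<le> mm_dist X x y"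
  shows "h \<in> borel_measurable (mm_meas X)"
proof -
  interpret Metric_space "mm_carrier X" "mm_dist X" using mm_space_metric[OF X] .
  show ?thesis
  proof (subst borel_measurable_iff_less, intro allI)
    fix a
    have "openin mtopology {w \<in> mm_carrier X. h w < a}"
      unfolding openin_mtopology
    proof (intro conjI allI impI)
      fix x assume x: "x \<in> {w \<in> mm_carrier X. h w < a}"
      show "\<exists>r>0. mball x r \<subseteq> {w \<in> mm_carrier X. h w < a}"
      proof (intro exI conjI)
        show "0 < a - h x" using x by simp
        show "mball x (a - h x) \<subseteq> {w \<in> mm_carrier X. h w < a}"
        proof
          fix y assume "y \<in> mball x (a - h x)"
          then have y: "y \<in> mm_carrier X" "x \<in> mm_carrier X" "mm_dist X x y < a - h x" by auto
          have "\<bar>h x - h y\<bar> \<le> mm_dist X x y" using lip y by simp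
          then show "y \<in> {w \<in> mm_carrier X. h w < a}" using y by auto
        qed
      qed
    qed auto
    then show "{w \<in> space (mm_meas X). h w < a} \<in> sets (mm_meas X)"
      using mm_space_open[OF X] mm_space_space[OF X] by simp
  qed
qed



lemma prob_Int_lower:
  assumes "prob_space M" "A \<in> sets M" "B \<in> sets M"
  shows "measure M A + measure M B - 1 \<le> measure M (A \<inter> B)"
proof -
  interpret prob_space M by fact
  have "measure M (A \<union> B) = measure M A + measure M B - measure M (A \<inter> B)"
    using assms by (intro measure_Un3) (auto simp: fmeasurable_eq_sets)
  moreover have "measure M (A \<union> B) \<le> 1" by (rule prob_le_1)
  ultimately show ?thesis by simp
qed

lemma star_metric: "Metric_space {0::real} (\<lambda>x y. 0)"
  by unfold_locales auto

lemma star_space: "space (mm_meas mm_star) = {0}"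
  by (simp add: mm_meas_def mm_star_def metric_borel_space[OF star_metric])

lemma star_dist: "mm_dist mm_star = (\<lambda>x y. 0)" by (simp add: mm_star_def mm_dist_def)
lemma star_carrier: "mm_carrier mm_star = {0}" by (simp add: mm_star_def mm_carrier_def)

lemma star_meas: "mm_meas mm_star = return (metric_borel {0} (\<lambda>x y. 0)) 0" by (simp add: mm_star_def mm_meas_def)

lemma dirac_in_star:
  assumes X: "mm_space X" and x: "x \<in> mm_carrier X" and ae: "AE y in mm_meas X. y = x"
  shows "X \<in> pyr_star"
proof -
  interpret prob_space "mm_meas X" using mm_space_prob[OF X] .
  interpret Metric_space "mm_carrier X" "mm_dist X" using mm_space_metric[OF X] .
  have xs: "x \<in> space (mm_meas X)" using x mm_space_space[OF X] by simp
  have eq: "mm_meas X = return (mm_meas X) x"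
  proof (rule measure_eqI)
    fix A assume A: "A \<in> sets (mm_meas X)"
    show "emeasure (mm_meas X) A = emeasure (return (mm_meas X) x) A"
    proof (cases "x \<in> A")
      case True
      then have "AE y in mm_meas X. y \<in> A" using ae by auto
      then have "prob A = 1" using AE_in_set_eq_1 A by simp
      then show ?thesis using True A by (simp add: emeasure_eq_measure)
    next
      case False
      then have "AE y in mm_meas X. y \<notin> A" using ae by auto
      moreover have "{y \<in> space (mm_meas X). \<not> y \<notin> A} = A" using sets.sets_into_space[OF A] by auto
      ultimately have "emeasure (mm_meas X) A = 0"
        using AE_iff_measurable[OF A, of "\<lambda>y. y \<notin> A"] by blast
      then show ?thesis using False A by simp
    qed
  qed simp
  have "mm_dominated X mm_star"
    unfolding mm_dominated_def
  proof (intro exI[of _ "\<lambda>_. x"] conjI)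
    show "(\<lambda>_. x) \<in> mm_carrier mm_star \<rightarrow> mm_carrier X" using x by auto
    show "\<forall>xa\<in>mm_carrier mm_star. \<forall>x'\<in>mm_carrier mm_star. mm_dist X x x \<le> mm_dist mm_star xa x'"
      unfolding star_dist star_carrier using x by simp
    show "(\<lambda>_. x) \<in> measurable (mm_meas mm_star) (mm_meas X)" by (rule measurable_const[OF xs])
    have "distr (mm_meas mm_star) (mm_meas X) (\<lambda>_. x) = return (mm_meas X) x"
      unfolding star_meas
      by (rule distr_return[OF measurable_const[OF xs]]) (simp add: metric_borel_space[OF star_metric])
    then show "distr (mm_meas mm_star) (mm_meas X) (\<lambda>_. x) = mm_meas X" using eq by metis
  qed
  then show ?thesis using X unfolding pyr_star_def by simp
qed

lemma dist_lip:
  assumes "Metric_space M d" "q \<in> M" "x \<in> M" "y \<in> M"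
  shows "\<bar>d q x - d q y\<bar> \<le> d x y"
proof -
  interpret Metric_space M d by fact
  show ?thesis using assms(2-4) triangle[of q x y] triangle[of q y x] commute[of x y] by auto
qed

lemma ball_sets:
  assumes X: "mm_space X" "q \<in> mm_carrier X"
  shows "{y \<in> mm_carrier X. mm_dist X q y \<le> r} \<in> sets (mm_meas X)"
    and "{y \<in> mm_carrier X. mm_dist X q y \<ge> r} \<in> sets (mm_meas X)"
    and "{y \<in> mm_carrier X. mm_dist X q y < r} \<in> sets (mm_meas X)"
proof -
  have m: "mm_dist X q \<in> borel_measurable (mm_meas X)"
    by (rule lip_meas[OF X(1)]) (rule dist_lip[OF mm_space_metric[OF X(1)] X(2)])
  show "{y \<in> mm_carrier X. mm_dist X q y \<le> r} \<in> sets (mm_meas X)"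
    using measurable_sets[OF m, of "{..r}"] mm_space_space[OF X(1)] by (simp add: vimage_def Int_def conj_commute)
  show "{y \<in> mm_carrier X. mm_dist X q y \<ge> r} \<in> sets (mm_meas X)"
    using measurable_sets[OF m, of "{r..}"] mm_space_space[OF X(1)] by (simp add: vimage_def Int_def conj_commute)
  show "{y \<in> mm_carrier X. mm_dist X q y < r} \<in> sets (mm_meas X)"
    using measurable_sets[OF m, of "{..<r}"] mm_space_space[OF X(1)] by (simp add: vimage_def Int_def conj_commute)
qed



lemma small_pos_le0:
  fixes z :: real assumes "\<And>n::nat. z < 4 / real (Suc n)" shows "z \<le> 0"
proof (rule ccontr)
  assume "\<not> z \<le> 0"
  then have "0 < z / 4" by simp
  then obtain n where n: "inverse (real (Suc n)) < z / 4" using reals_Archimedean by blast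
  then have "4 / real (Suc n) < z" by (simp add: field_simps)
  with assms[of n] show False by simp
qed

lemma nondirac:
  assumes X: "mm_space X" and nX: "X \<notin> pyr_star"
  shows "\<exists>x\<in>mm_carrier X. \<exists>r1 r2. 0 \<le> r1 \<and> r1 < r2 \<and>
     0 < measure (mm_meas X) {y \<in> mm_carrier X. mm_dist X x y \<le> r1} \<and>
     0 < measure (mm_meas X) {y \<in> mm_carrier X. mm_dist X x y \<ge> r2}"
proof (rule ccontr)
  assume H0: "\<not> ?thesis"
  define C where "C = mm_carrier X"
  define d where "d = mm_dist X"
  define \<mu> where "\<mu> = mm_meas X"
  interpret prob_space \<mu> unfolding \<mu>_def using mm_space_prob[OF X] .
  interpret Metric_space C d unfolding C_def d_def using mm_space_metric[OF X] .
  have spc: "space \<mu> = C" unfolding \<mu>_def C_def using mm_space_space[OF X] .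
  have H: "\<And>x (r1::real) r2. x \<in> C \<Longrightarrow> 0 \<le> r1 \<Longrightarrow> r1 < r2 \<Longrightarrow>
      measure \<mu> {y \<in> C. d x y \<le> r1} = 0 \<or> measure \<mu> {y \<in> C. d x y \<ge> r2} = 0"
  proof -
    fix x and r1 r2 :: real assume "x \<in> C" "0 \<le> r1" "r1 < r2"
    then have "\<not> (0 < measure \<mu> {y \<in> C. d x y \<le> r1} \<and> 0 < measure \<mu> {y \<in> C. d x y \<ge> r2})"
      using H0 unfolding C_def d_def \<mu>_def by blast
    then show "measure \<mu> {y \<in> C. d x y \<le> r1} = 0 \<or> measure \<mu> {y \<in> C. d x y \<ge> r2} = 0"
      using measure_nonneg[of \<mu> "{y \<in> C. d x y \<le> r1}"] measure_nonneg[of \<mu> "{y \<in> C. d x y \<ge> r2}"] by linarith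
  qed
  have bs: "\<And>q r. q \<in> C \<Longrightarrow> {y \<in> C. d q y \<le> r} \<in> sets \<mu>"
          "\<And>q r. q \<in> C \<Longrightarrow> {y \<in> C. d q y \<ge> r} \<in> sets \<mu>"
    using ball_sets[OF X] unfolding C_def d_def \<mu>_def by auto
  have null_AE: "AE y in \<mu>. y \<notin> N" if "N \<in> sets \<mu>" "measure \<mu> N = 0" for N
  proof -
    have eq: "{y \<in> space \<mu>. \<not> y \<notin> N} = N" using sets.sets_into_space[OF that(1)] by auto
    have em: "emeasure \<mu> N = 0" using that by (simp add: emeasure_eq_measure)
    show ?thesis using AE_iff_measurable[OF that(1) eq] em by simp
  qed
  have "separable_space mtopology" using X unfolding mm_space_def C_def d_def by blast
  then obtain D where D: "countable D" "D \<subseteq> C" "mtopology closure_of D = C"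
    unfolding separable_space_def topspace_mtopology by blast
  have dense: "\<exists>q\<in>D. d y q < r" if yC: "y \<in> C" and rp: "r > 0" for y r
  proof -
    have "y \<in> mtopology closure_of D" using D(3) yC by simp
    then obtain q where "q \<in> D" "q \<in> mball y r" using rp unfolding metric_closure_of by blast
    then show ?thesis by auto
  qed
  have step: "\<exists>q\<in>D. AE y in \<mu>. d q y < 2 / real (Suc n)" for n
  proof -
    define e where "e = 1 / real (Suc n)"
    have e: "e > 0" unfolding e_def by simp
    have "\<exists>q\<in>D. measure \<mu> {y \<in> C. d q y \<le> e} \<noteq> 0"
    proof (rule ccontr)
      assume "\<not> ?thesis"
      then have "\<forall>q\<in>D. AE y in \<mu>. y \<notin> {y \<in> C. d q y \<le> e}"
        using null_AE bs D(2) by blast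
      then have "AE y in \<mu>. \<forall>q\<in>D. y \<notin> {y \<in> C. d q y \<le> e}"
        by (rule AE_ball_countable[OF D(1), THEN iffD2])
      then have "AE y in \<mu>. False" using AE_space
      proof eventually_elim
        case (elim y)
        then have yC: "y \<in> C" using spc by simp
        obtain q where q: "q \<in> D" "d y q < e" using dense[OF yC e] by blast
        have "d q y \<le> e" using q commute[of y q] by simp
        then show False using elim q yC by blast
      qed
      then show False by simp
    qed
    then obtain q where q: "q \<in> D" "measure \<mu> {y \<in> C. d q y \<le> e} \<noteq> 0" by blast
    have "measure \<mu> {y \<in> C. d q y \<ge> 2 * e} = 0" using H[of q e "2*e"] q D(2) e by auto
    then have "AE y in \<mu>. y \<notin> {y \<in> C. d q y \<ge> 2 * e}" using null_AE bs q D(2) by blast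
    then have "AE y in \<mu>. d q y < 2 * e" using AE_space
      by eventually_elim (auto simp: spc)
    then show ?thesis using q unfolding e_def by auto
  qed
  then obtain q where q: "\<And>n. q n \<in> D" "\<And>n. AE y in \<mu>. d (q n) y < 2 / real (Suc n)"
    by metis
  have ae: "AE y in \<mu>. \<forall>n. d (q n) y < 2 / real (Suc n)"
    using q(2) by (simp add: AE_all_countable)
  obtain xs where xs: "xs \<in> C" "\<And>n. d (q n) xs < 2 / real (Suc n)"
  proof -
    have "\<exists>xs\<in>C. \<forall>n. d (q n) xs < 2 / real (Suc n)"
    proof (rule ccontr)
      assume nx: "\<not> ?thesis"
      have "AE y in \<mu>. False" using ae AE_space
        by eventually_elim (use nx spc in auto)
      then show False by simp
    qed
    then show ?thesis using that by blast
  qed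
  have "AE y in \<mu>. y = xs" using AE_space ae
  proof eventually_elim
    case (elim y)
    then have y: "y \<in> space \<mu>" "\<forall>n. d (q n) y < 2 / real (Suc n)" by auto
    have yC: "y \<in> C" using y spc by simp
    have "d xs y < 4 / real (Suc n)" for n
    proof -
      have qC: "q n \<in> C" using q(1) D(2) by blast
      have t: "d xs y \<le> d xs (q n) + d (q n) y" using triangle[OF xs(1) qC yC] .
      have a: "d xs (q n) < 2 / real (Suc n)" using xs(2)[of n] commute[of xs "q n"] by simp
      have b: "d (q n) y < 2 / real (Suc n)" using y(2) by blast
      have c: "2 / real (Suc n) + 2 / real (Suc n) = 4 / real (Suc n)" by (simp add: add_divide_distrib[symmetric])
      show ?thesis using t a b c by linarith
    qed
    then have "d xs y \<le> 0" by (rule small_pos_le0)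
    then have "d xs y = 0" using nonneg[of xs y] by simp
    then show "y = xs" using zero[OF xs(1) yC] by simp
  qed
  then have "X \<in> pyr_star" using dirac_in_star[OF X] xs(1) unfolding C_def \<mu>_def by blast
  with nX show False by simp
qed



lemma scale_carrier[simp]: "mm_carrier (mm_scale t X) = mm_carrier X"
  by (simp add: mm_scale_def mm_carrier_def)
lemma scale_dist[simp]: "mm_dist (mm_scale t X) = (\<lambda>x y. t * mm_dist X x y)"
  by (simp add: mm_scale_def mm_dist_def)
lemma scale_meas[simp]: "mm_meas (mm_scale t X) = mm_meas X"
  by (simp add: mm_scale_def mm_meas_def)

lemma coupling_marg:
  assumes pi: "\<pi> \<in> couplings \<mu> \<nu>"
  shows "A \<in> sets \<mu> \<Longrightarrow> measure \<pi> (A \<times> space \<nu>) = measure \<mu> A"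
    and "B \<in> sets \<nu> \<Longrightarrow> measure \<pi> (space \<mu> \<times> B) = measure \<nu> B"
    and "space \<pi> = space \<mu> \<times> space \<nu>"
proof -
  have s: "sets \<pi> = sets (\<mu> \<Otimes>\<^sub>M \<nu>)" and m1: "distr \<pi> \<mu> fst = \<mu>" and m2: "distr \<pi> \<nu> snd = \<nu>"
    using pi unfolding couplings_def by auto
  show sp: "space \<pi> = space \<mu> \<times> space \<nu>"
    using sets_eq_imp_space_eq[OF s] by (simp add: space_pair_measure)
  have f: "fst \<in> measurable \<pi> \<mu>" using measurable_cong_sets[OF s refl] measurable_fst by blast
  have g: "snd \<in> measurable \<pi> \<nu>" using measurable_cong_sets[OF s refl] measurable_snd by blast
  show "measure \<pi> (A \<times> space \<nu>) = measure \<mu> A" if A: "A \<in> sets \<mu>"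
  proof -
    have "measure \<mu> A = measure (distr \<pi> \<mu> fst) A" using m1 by simp
    also have "\<dots> = measure \<pi> (fst -` A \<inter> space \<pi>)" using measure_distr[OF f A] .
    also have "fst -` A \<inter> space \<pi> = A \<times> space \<nu>" using sp sets.sets_into_space[OF A] by auto
    finally show ?thesis by simp
  qed
  show "measure \<pi> (space \<mu> \<times> B) = measure \<nu> B" if B: "B \<in> sets \<nu>"
  proof -
    have "measure \<nu> B = measure (distr \<pi> \<nu> snd) B" using m2 by simp
    also have "\<dots> = measure \<pi> (snd -` B \<inter> space \<pi>)" using measure_distr[OF g B] .
    also have "snd -` B \<inter> space \<pi> = space \<mu> \<times> B" using sp sets.sets_into_space[OF B] by auto
    finally show ?thesis by simp
  qed
qed

lemma box_lower:
  fixes X Y :: mm and t eps kap c r1 r2 x :: real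
  assumes X: "mm_space X" and Y: "mm_space Y" and t: "t > 0" and x: "x \<in> mm_carrier X"
    and cA: "c \<le> measure (mm_meas X) {z \<in> mm_carrier X. mm_dist X x z \<le> r1}"
    and cB: "c \<le> measure (mm_meas X) {z \<in> mm_carrier X. mm_dist X x z \<ge> r2}"
    and eps: "0 < eps" "eps \<le> c / 2" and kap: "kap < c / 2"
    and box: "box_dist X (mm_scale t Y) < ereal eps"
  shows "ereal ((r2 - r1 - eps) / t) \<le> obs_diam Y kap"
proof -
  define \<mu> where "\<mu> = mm_meas X"
  define \<nu> where "\<nu> = mm_meas Y"
  define CX where "CX = mm_carrier X"
  define CY where "CY = mm_carrier Y"
  define dX where "dX = mm_dist X"
  define dY where "dY = mm_dist Y"
  interpret MX: prob_space \<mu> unfolding \<mu>_def using mm_space_prob[OF X] .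
  interpret MY: prob_space \<nu> unfolding \<nu>_def using mm_space_prob[OF Y] .
  interpret DX: Metric_space CX dX unfolding CX_def dX_def using mm_space_metric[OF X] .
  interpret DY: Metric_space CY dY unfolding CY_def dY_def using mm_space_metric[OF Y] .
  have spX: "space \<mu> = CX" unfolding \<mu>_def CX_def using mm_space_space[OF X] .
  have spY: "space \<nu> = CY" unfolding \<nu>_def CY_def using mm_space_space[OF Y] .
  have c1: "c \<le> 1" using cA MX.prob_le_1 unfolding \<mu>_def by (meson order_trans)
  obtain \<pi> S where pi: "\<pi> \<in> couplings \<mu> \<nu>" and S: "S \<in> sets (\<mu> \<Otimes>\<^sub>M \<nu>)"
    and lt: "max (distortion X (mm_scale t Y) S) (ereal (1 - measure \<pi> S)) < ereal eps"
    using box unfolding box_dist_def INF_less_iff scale_meas \<mu>_def \<nu>_def by blast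
  interpret P: prob_space \<pi> using pi unfolding couplings_def by auto
  have spP: "space \<pi> = CX \<times> CY" using coupling_marg(3)[OF pi] spX spY by simp
  have setsP: "sets \<pi> = sets (\<mu> \<Otimes>\<^sub>M \<nu>)" using pi unfolding couplings_def by auto
  have SP: "S \<in> sets \<pi>" using S setsP by simp
  have Ssub: "S \<subseteq> CX \<times> CY" using sets.sets_into_space[OF SP] spP by simp
  have mS: "1 - measure \<pi> S < eps" using lt by simp
  have dis: "\<bar>dX (fst p) (fst q) - t * dY (snd p) (snd q)\<bar> < eps" if "p \<in> S" "q \<in> S" for p q
  proof -
    have "ereal \<bar>dX (fst p) (fst q) - t * dY (snd p) (snd q)\<bar> \<le> distortion X (mm_scale t Y) S"
      unfolding distortion_def scale_dist dX_def dY_def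
      by (rule SUP_upper2[OF that(1)], rule SUP_upper2[OF that(2)]) simp
    also have "\<dots> < eps" using lt by simp
    finally show ?thesis by simp
  qed
  have Sne: "S \<noteq> {}" using mS eps c1 by auto
  define h where "h y = Inf ((\<lambda>p. dX x (fst p) + t * dY (snd p) y) ` S)" for y
  have bdd: "bdd_below ((\<lambda>p. dX x (fst p) + t * dY (snd p) y) ` S)" if "y \<in> CY" for y
  proof (rule bdd_belowI2[of _ 0])
    fix p assume "p \<in> S"
    then have "fst p \<in> CX" "snd p \<in> CY" using Ssub by auto
    then show "0 \<le> dX x (fst p) + t * dY (snd p) y" using that t x unfolding CX_def[symmetric]
      by (simp add: DX.nonneg DY.nonneg)
  qed
  have h1: "h (snd p) \<le> dX x (fst p)" if p: "p \<in> S" for p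
  proof -
    have sp: "snd p \<in> CY" using p Ssub by auto
    have "h (snd p) \<le> dX x (fst p) + t * dY (snd p) (snd p)"
      unfolding h_def by (rule cInf_lower[OF imageI[OF p] bdd[OF sp]])
    then show ?thesis using sp by simp
  qed
  have h2: "dX x (fst p) - eps \<le> h (snd p)" if p: "p \<in> S" for p
    unfolding h_def
  proof (rule cInf_greatest)
    show "(\<lambda>q. dX x (fst q) + t * dY (snd q) (snd p)) ` S \<noteq> {}" using Sne by simp
  next
    fix v assume "v \<in> (\<lambda>q. dX x (fst q) + t * dY (snd q) (snd p)) ` S"
    then obtain q where q: "q \<in> S" "v = dX x (fst q) + t * dY (snd q) (snd p)" by auto
    have fq: "fst q \<in> CX" and fp: "fst p \<in> CX" using q p Ssub by auto
    have "dX x (fst p) \<le> dX x (fst q) + dX (fst q) (fst p)"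
      using DX.triangle[OF _ fq fp] x unfolding CX_def by simp
    moreover have "dX (fst q) (fst p) < t * dY (snd q) (snd p) + eps" using dis[OF q(1) p] by linarith
    ultimately show "dX x (fst p) - eps \<le> v" using q(2) by linarith
  qed
  have h3: "h y \<le> h y' + t * dY y' y" if y: "y \<in> CY" "y' \<in> CY" for y y'
  proof -
    have "h y - t * dY y' y \<le> h y'"
      unfolding h_def[of y']
    proof (rule cInf_greatest)
      show "(\<lambda>p. dX x (fst p) + t * dY (snd p) y') ` S \<noteq> {}" using Sne by simp
    next
      fix v assume "v \<in> (\<lambda>p. dX x (fst p) + t * dY (snd p) y') ` S"
      then obtain q where q: "q \<in> S" "v = dX x (fst q) + t * dY (snd q) y'" by auto
      have sq: "snd q \<in> CY" using q Ssub by auto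
      have "h y \<le> dX x (fst q) + t * dY (snd q) y"
        unfolding h_def by (rule cInf_lower[OF imageI[OF q(1)] bdd[OF y(1)]])
      moreover have "dY (snd q) y \<le> dY (snd q) y' + dY y' y" using DY.triangle[OF sq y(2) y(1)] .
      ultimately show "h y - t * dY y' y \<le> v" using q(2) t by (smt (verit) distrib_left mult_left_mono)
    qed
    then show ?thesis by simp
  qed
  define g where "g y = h y / t" for y
  have glip: "\<bar>g y - g y'\<bar> \<le> dY y y'" if "y \<in> CY" "y' \<in> CY" for y y'
  proof -
    have "\<bar>h y - h y'\<bar> \<le> t * dY y y'"
      using h3[OF that] h3[OF that(2) that(1)] DY.commute[of y y'] unfolding abs_le_iff by simp
    then show ?thesis unfolding g_def using t by (simp add: diff_divide_distrib[symmetric] abs_div pos_divide_le_eq mult.commute)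
  qed
  have gm: "g \<in> borel_measurable \<nu>"
    unfolding \<nu>_def by (rule lip_meas[OF Y]) (use glip in \<open>auto simp: CY_def dY_def\<close>)
  define A where "A = {z \<in> CX. dX x z \<le> r1}"
  define B where "B = {z \<in> CX. dX x z \<ge> r2}"
  define HA where "HA = {y \<in> CY. g y \<le> r1 / t}"
  define HB where "HB = {y \<in> CY. g y \<ge> (r2 - eps) / t}"
  have Am: "A \<in> sets \<mu>" and Bm: "B \<in> sets \<mu>"
    unfolding A_def B_def \<mu>_def CX_def dX_def using ball_sets[OF X x] by auto
  have HAm: "HA \<in> sets \<nu>"
    using measurable_sets[OF gm, of "{..r1/t}"] unfolding HA_def spY[symmetric] by (simp add: vimage_def Int_def conj_commute)
  have HBm: "HB \<in> sets \<nu>"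
    using measurable_sets[OF gm, of "{(r2-eps)/t..}"] unfolding HB_def spY[symmetric] by (simp add: vimage_def Int_def conj_commute)
  have muA: "c \<le> measure \<mu> A" using cA unfolding A_def \<mu>_def CX_def dX_def .
  have muB: "c \<le> measure \<mu> B" using cB unfolding B_def \<mu>_def CX_def dX_def .
  have AY: "A \<times> CY \<in> sets \<pi>" "B \<times> CY \<in> sets \<pi>" "CX \<times> HA \<in> sets \<pi>" "CX \<times> HB \<in> sets \<pi>"
    using Am Bm HAm HBm sets.top[of \<mu>] sets.top[of \<nu>] spX spY setsP by auto
  have nuHA: "c - eps \<le> measure \<nu> HA"
  proof -
    have "c - eps \<le> measure \<pi> S + measure \<pi> (A \<times> CY) - 1"
      using mS muA coupling_marg(1)[OF pi Am] spY by simp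
    also have "\<dots> \<le> measure \<pi> (S \<inter> (A \<times> CY))"
      by (rule prob_Int_lower[OF P.prob_space_axioms SP AY(1)])
    also have "\<dots> \<le> measure \<pi> (CX \<times> HA)"
    proof (rule P.finite_measure_mono[OF _ AY(3)])
      show "S \<inter> (A \<times> CY) \<subseteq> CX \<times> HA"
      proof
        fix p assume p: "p \<in> S \<inter> (A \<times> CY)"
        then have "h (snd p) \<le> r1" using h1[of p] unfolding A_def by force
        then have "g (snd p) \<le> r1 / t" unfolding g_def using t by (simp add: divide_right_mono)
        then show "p \<in> CX \<times> HA" using p Ssub unfolding HA_def by (auto simp: mem_Times_iff)
      qed
    qed
    also have "\<dots> = measure \<nu> HA" using coupling_marg(2)[OF pi HAm] spX by simp
    finally show ?thesis .
  qed
  have nuHB: "c - eps \<le> measure \<nu> HB"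
  proof -
    have "c - eps \<le> measure \<pi> S + measure \<pi> (B \<times> CY) - 1"
      using mS muB coupling_marg(1)[OF pi Bm] spY by simp
    also have "\<dots> \<le> measure \<pi> (S \<inter> (B \<times> CY))"
      by (rule prob_Int_lower[OF P.prob_space_axioms SP AY(2)])
    also have "\<dots> \<le> measure \<pi> (CX \<times> HB)"
    proof (rule P.finite_measure_mono[OF _ AY(4)])
      show "S \<inter> (B \<times> CY) \<subseteq> CX \<times> HB"
      proof
        fix p assume p: "p \<in> S \<inter> (B \<times> CY)"
        then have "r2 - eps \<le> h (snd p)" using h2[of p] unfolding B_def by force
        then have "(r2 - eps) / t \<le> g (snd p)" unfolding g_def using t by (simp add: divide_right_mono)
        then show "p \<in> CX \<times> HB" using p Ssub unfolding HB_def by (auto simp: mem_Times_iff)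
      qed
    qed
    also have "\<dots> = measure \<nu> HB" using coupling_marg(2)[OF pi HBm] spX by simp
    finally show ?thesis .
  qed
  have pd: "ereal ((r2 - r1 - eps) / t) \<le> partial_diam (distr \<nu> borel g) kap"
    unfolding partial_diam_def
  proof (rule INF_greatest)
    fix A' assume A': "A' \<in> {A \<in> sets borel. 1 - kap \<le> measure (distr \<nu> borel g) A}"
    define G where "G = g -` A' \<inter> space \<nu>"
    have Gm: "G \<in> sets \<nu>" unfolding G_def using measurable_sets[OF gm] A' by auto
    have mG: "1 - kap \<le> measure \<nu> G" using A' measure_distr[OF gm, of A'] unfolding G_def by auto
    have "0 < measure \<nu> (G \<inter> HA)"
      using prob_Int_lower[OF MY.prob_space_axioms Gm HAm] mG nuHA eps kap by linarith
    then obtain y1 where y1: "y1 \<in> G" "y1 \<in> HA" by (metis Int_iff equals0I measure_empty less_irrefl)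
    have "0 < measure \<nu> (G \<inter> HB)"
      using prob_Int_lower[OF MY.prob_space_axioms Gm HBm] mG nuHB eps kap by linarith
    then obtain y2 where y2: "y2 \<in> G" "y2 \<in> HB" by (metis Int_iff equals0I measure_empty less_irrefl)
    have u: "g y1 \<in> A'" "g y1 \<le> r1 / t" using y1 unfolding G_def HA_def by auto
    have v: "g y2 \<in> A'" "(r2 - eps) / t \<le> g y2" using y2 unfolding G_def HB_def by auto
    have "(r2 - r1 - eps) / t \<le> \<bar>g y2 - g y1\<bar>"
      using u(2) v(2) by (simp add: diff_divide_distrib)
    then show "ereal ((r2 - r1 - eps) / t) \<le> (SUP x\<in>A'. SUP y\<in>A'. ereal \<bar>x - y\<bar>)"
      by (intro SUP_upper2[OF v(1)] SUP_upper2[OF u(1)]) simp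
  qed
  also have "\<dots> \<le> obs_diam Y kap"
    unfolding obs_diam_def
  proof (rule SUP_upper2)
    show "g \<in> {f. \<forall>x\<in>mm_carrier Y. \<forall>x'\<in>mm_carrier Y. \<bar>f x - f x'\<bar> \<le> mm_dist Y x x'}"
      using glip unfolding CY_def dY_def by auto
  qed (simp add: \<nu>_def)
  finally show ?thesis .
qed



lemma mm_tuple[simp]: "mm_carrier (a, b, c) = a" "mm_dist (a, b, c) = b" "mm_meas (a, b, c) = c"
  by (simp_all add: mm_carrier_def mm_dist_def mm_meas_def)

lemma box_nonneg: "0 \<le> box_dist X Y"
  unfolding box_dist_def
proof (intro INF_greatest)
  fix \<pi> S assume pi: "\<pi> \<in> couplings (mm_meas X) (mm_meas Y)"
  then interpret prob_space \<pi> unfolding couplings_def by auto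
  have "0 \<le> ereal (1 - measure \<pi> S)" using prob_le_1[of S] by simp
  then show "0 \<le> max (distortion X Y S) (ereal (1 - measure \<pi> S))" using max.cobounded2 order_trans by blast
qed

lemma star_is_return:
  assumes "X \<in> pyr_star"
  shows "\<exists>x0\<in>mm_carrier X. mm_meas X = return (mm_meas X) x0"
proof -
  have X: "mm_space X" and "mm_dominated X mm_star" using assms unfolding pyr_star_def by auto
  then obtain f where f: "f \<in> mm_carrier mm_star \<rightarrow> mm_carrier X"
    "f \<in> measurable (mm_meas mm_star) (mm_meas X)"
    "distr (mm_meas mm_star) (mm_meas X) f = mm_meas X" unfolding mm_dominated_def by blast
  have "distr (mm_meas mm_star) (mm_meas X) f = return (mm_meas X) (f 0)"
    using distr_return[OF f(2)[unfolded star_meas measurable_return1], of 0] unfolding star_meas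
    by (simp add: metric_borel_space[OF star_metric])
  moreover have "f 0 \<in> mm_carrier X" using f(1) star_carrier by auto
  ultimately show ?thesis using f(3) by metis
qed

lemma box_dirac:
  assumes X: "X \<in> pyr_star" and Z: "mm_space Z" and z0: "z0 \<in> mm_carrier Z"
    and Zr: "mm_meas Z = return (mm_meas Z) z0"
  shows "box_dist X (mm_scale s Z) \<le> 0"
proof -
  have Xs: "mm_space X" using X unfolding pyr_star_def by auto
  obtain x0 where x0: "x0 \<in> mm_carrier X" and Xr: "mm_meas X = return (mm_meas X) x0"
    using star_is_return[OF X] by blast
  define M where "M = mm_meas X \<Otimes>\<^sub>M mm_meas Z"
  have spM: "space M = mm_carrier X \<times> mm_carrier Z"
    unfolding M_def by (simp add: space_pair_measure mm_space_space[OF Xs] mm_space_space[OF Z])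
  define \<pi> where "\<pi> = return M (x0, z0)"
  have pin: "(x0, z0) \<in> space M" using spM x0 z0 by simp
  have c: "\<pi> \<in> couplings (mm_meas X) (mm_meas (mm_scale s Z))"
    unfolding couplings_def scale_meas
  proof (intro CollectI conjI)
    show "sets \<pi> = sets (mm_meas X \<Otimes>\<^sub>M mm_meas Z)" unfolding \<pi>_def M_def by simp
    show "prob_space \<pi>" unfolding \<pi>_def by (rule prob_space_return[OF pin])
    have "distr \<pi> (mm_meas X) fst = return (mm_meas X) x0"
      unfolding \<pi>_def using distr_return[OF _ pin, of fst "mm_meas X"] unfolding M_def by simp
    then show "distr \<pi> (mm_meas X) fst = mm_meas X" using Xr by metis
    have "distr \<pi> (mm_meas Z) snd = return (mm_meas Z) z0"
      unfolding \<pi>_def using distr_return[OF _ pin, of snd "mm_meas Z"] unfolding M_def by simp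
    then show "distr \<pi> (mm_meas Z) snd = mm_meas Z" using Zr by metis
  qed
  interpret DX: Metric_space "mm_carrier X" "mm_dist X" using mm_space_metric[OF Xs] .
  interpret DZ: Metric_space "mm_carrier Z" "mm_dist Z" using mm_space_metric[OF Z] .
  have sx: "{x0} \<in> sets (mm_meas X)"
  proof -
    have "{y \<in> mm_carrier X. mm_dist X x0 y \<le> 0} = {x0}"
    proof (intro equalityI subsetI)
      fix y assume "y \<in> {y \<in> mm_carrier X. mm_dist X x0 y \<le> 0}"
      then have "y \<in> mm_carrier X" "mm_dist X x0 y = 0" using DX.nonneg[of x0 y] by auto
      then show "y \<in> {x0}" using DX.zero[OF x0] by auto
    qed (use x0 in auto)
    then show ?thesis using ball_sets(1)[OF Xs x0, of 0] by simp
  qed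
  have sz: "{z0} \<in> sets (mm_meas Z)"
  proof -
    have "{y \<in> mm_carrier Z. mm_dist Z z0 y \<le> 0} = {z0}"
    proof (intro equalityI subsetI)
      fix y assume "y \<in> {y \<in> mm_carrier Z. mm_dist Z z0 y \<le> 0}"
      then have "y \<in> mm_carrier Z" "mm_dist Z z0 y = 0" using DZ.nonneg[of z0 y] by auto
      then show "y \<in> {z0}" using DZ.zero[OF z0] by auto
    qed (use z0 in auto)
    then show ?thesis using ball_sets(1)[OF Z z0, of 0] by simp
  qed
  have S: "{(x0, z0)} \<in> sets (mm_meas X \<Otimes>\<^sub>M mm_meas (mm_scale s Z))"
    using pair_measureI[OF sx sz] by simp
  have d: "distortion X (mm_scale s Z) {(x0, z0)} = 0"
    unfolding distortion_def using x0 z0 by simp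
  have m: "measure \<pi> {(x0, z0)} = 1"
    unfolding \<pi>_def using S unfolding M_def by (simp add: measure_return)
  have "box_dist X (mm_scale s Z) \<le> max (distortion X (mm_scale s Z) {(x0, z0)}) (ereal (1 - measure \<pi> {(x0, z0)}))"
    unfolding box_dist_def by (rule INF_lower2[OF c], rule INF_lower2[OF S]) simp
  then show ?thesis using d m by simp
qed

lemma pyr_has_dirac:
  assumes P: "pyramid P"
  shows "\<exists>Z\<in>P. \<exists>z0\<in>mm_carrier Z. mm_meas Z = return (mm_meas Z) z0"
proof -
  obtain X0 where X0: "X0 \<in> P" using P unfolding pyramid_def by auto
  have X: "mm_space X0" using X0 P unfolding pyramid_def by auto
  interpret prob_space "mm_meas X0" using mm_space_prob[OF X] .
  obtain z0 where z0: "z0 \<in> mm_carrier X0" using not_empty mm_space_space[OF X] by auto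
  have zs: "z0 \<in> space (mm_meas X0)" using z0 mm_space_space[OF X] by simp
  define Z where "Z = (mm_carrier X0, mm_dist X0, return (mm_meas X0) z0)"
  have Zs: "mm_space Z" using X prob_space_return[OF zs] unfolding Z_def mm_space_def by simp
  have "mm_dominated Z X0"
    unfolding mm_dominated_def
  proof (intro exI[of _ "\<lambda>_. z0"] conjI)
    show "(\<lambda>_. z0) \<in> mm_carrier X0 \<rightarrow> mm_carrier Z" using z0 unfolding Z_def by simp
    show "\<forall>x\<in>mm_carrier X0. \<forall>x'\<in>mm_carrier X0. mm_dist Z z0 z0 \<le> mm_dist X0 x x'"
      using z0 Metric_space.zero[OF mm_space_metric[OF X] z0 z0] Metric_space.nonneg[OF mm_space_metric[OF X]] unfolding Z_def by simp
    show "(\<lambda>_. z0) \<in> measurable (mm_meas X0) (mm_meas Z)"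
      unfolding Z_def using zs by simp
    show "distr (mm_meas X0) (mm_meas Z) (\<lambda>_. z0) = mm_meas Z"
    proof -
      have "distr (mm_meas X0) (return (mm_meas X0) z0) (\<lambda>_. z0) = return (return (mm_meas X0) z0) z0"
        by (rule distr_const) (simp add: zs)
      also have "\<dots> = return (mm_meas X0) z0" by (rule return_cong) simp
      finally show ?thesis unfolding Z_def by simp
    qed
  qed
  then have "Z \<in> P" using P X0 Zs unfolding pyramid_def by blast
  moreover have "z0 \<in> mm_carrier Z" "mm_meas Z = return (mm_meas Z) z0" unfolding Z_def using z0 by (simp_all add: return_cong[of "return (mm_meas X0) z0" "mm_meas X0" z0])
  ultimately show ?thesis by blast
qed



lemma dirA:
  assumes P: "pyramid P" and fin: "obs_diam_finite P" and tpos: "\<forall>k. 0 < t k" and tlim: "t \<longlonglongrightarrow> 0"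
  shows "pyr_weak_conv (\<lambda>k. pyr_scale (t k) P) pyr_star"
  unfolding pyr_weak_conv_def
proof (intro conjI ballI allI impI)
  fix X assume X: "X \<in> pyr_star"
  obtain Z z0 where Z: "Z \<in> P" "z0 \<in> mm_carrier Z" "mm_meas Z = return (mm_meas Z) z0"
    using pyr_has_dirac[OF P] by blast
  have Zs: "mm_space Z" using Z(1) P unfolding pyramid_def by auto
  have "(INF Y\<in>pyr_scale (t k) P. box_dist X Y) = 0" for k
  proof (rule antisym)
    have "mm_scale (t k) Z \<in> pyr_scale (t k) P" using Z(1) unfolding pyr_scale_def by simp
    then show "(INF Y\<in>pyr_scale (t k) P. box_dist X Y) \<le> 0"
      using box_dirac[OF X Zs Z(2) Z(3)] by (meson INF_lower2)
    show "0 \<le> (INF Y\<in>pyr_scale (t k) P. box_dist X Y)" by (rule INF_greatest) (rule box_nonneg)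
  qed
  then show "(\<lambda>k. INF Y\<in>pyr_scale (t k) P. box_dist X Y) \<longlonglongrightarrow> 0" by simp
next
  fix X assume XX: "mm_space X \<and> X \<notin> pyr_star"
  then have X: "mm_space X" and nX: "X \<notin> pyr_star" by auto
  obtain x r1 r2 where x: "x \<in> mm_carrier X" and r: "0 \<le> r1" "r1 < r2"
    and m1: "0 < measure (mm_meas X) {y \<in> mm_carrier X. mm_dist X x y \<le> r1}"
    and m2: "0 < measure (mm_meas X) {y \<in> mm_carrier X. mm_dist X x y \<ge> r2}"
    using nondirac[OF X nX] by blast
  interpret prob_space "mm_meas X" using mm_space_prob[OF X] .
  define c where "c = min (measure (mm_meas X) {y \<in> mm_carrier X. mm_dist X x y \<le> r1})
                           (measure (mm_meas X) {y \<in> mm_carrier X. mm_dist X x y \<ge> r2})"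
  have c0: "0 < c" using m1 m2 unfolding c_def by simp
  have c1: "c \<le> 1" unfolding c_def using prob_le_1 by (meson min.coboundedI1)
  define eps where "eps = min (c / 2) ((r2 - r1) / 2)"
  define kap where "kap = c / 4"
  have eps0: "0 < eps" using c0 r unfolding eps_def by simp
  have kap: "0 < kap" "kap < 1" using c0 c1 unfolding kap_def by auto
  have "obs_diam_pyr P kap < \<infinity>" using fin kap unfolding obs_diam_finite_def by blast
  then obtain n :: nat where n: "obs_diam_pyr P kap < ereal (real n)"
    using less_PInf_Ex_of_nat by auto
  define D where "D = (r2 - r1) / 2"
  have D0: "0 < D" using r unfolding D_def by simp
  have "eventually (\<lambda>k. t k < D / (real n + 1)) sequentially"
    using order_tendstoD(2)[OF tlim] D0 by simp
  then have ev: "eventually (\<lambda>k. ereal eps \<le> (INF Y\<in>pyr_scale (t k) P. box_dist X Y)) sequentially"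
  proof eventually_elim
    case (elim k)
    have tk: "0 < t k" using tpos by simp
    show ?case
    proof (rule INF_greatest)
      fix Y assume "Y \<in> pyr_scale (t k) P"
      then obtain Y' where Y': "Y' \<in> P" "Y = mm_scale (t k) Y'" unfolding pyr_scale_def by auto
      have Ys: "mm_space Y'" using Y'(1) P unfolding pyramid_def by auto
      show "ereal eps \<le> box_dist X Y"
      proof (rule ccontr)
        assume "\<not> ereal eps \<le> box_dist X Y"
        then have b: "box_dist X (mm_scale (t k) Y') < ereal eps" using Y'(2) by simp
        have cA: "c \<le> measure (mm_meas X) {y \<in> mm_carrier X. mm_dist X x y \<le> r1}"
          and cB: "c \<le> measure (mm_meas X) {y \<in> mm_carrier X. mm_dist X x y \<ge> r2}"
          unfolding c_def by simp_all
        have "ereal ((r2 - r1 - eps) / t k) \<le> obs_diam Y' kap"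
          by (rule box_lower[OF X Ys tk x cA cB eps0 _ _ b])
             (use c0 in \<open>auto simp: eps_def kap_def\<close>)
        also have "\<dots> \<le> obs_diam_pyr P kap" unfolding obs_diam_pyr_def using Y'(1) by (rule SUP_upper)
        also have "\<dots> < ereal (real n)" by (rule n)
        finally have A: "(r2 - r1 - eps) / t k < real n" by simp
        have "eps \<le> (r2 - r1) / 2" unfolding eps_def by (rule min.cobounded2)
        then have "D \<le> r2 - r1 - eps" unfolding D_def by (simp add: field_simps)
        then have "D / t k \<le> (r2 - r1 - eps) / t k" using tk by (simp add: divide_right_mono)
        moreover have "real n + 1 < D / t k" using elim tk D0 by (simp add: field_simps)
        ultimately show False using A by linarith
      qed
    qed
  qed
  have "ereal eps \<le> liminf (\<lambda>k. INF Y\<in>pyr_scale (t k) P. box_dist X Y)"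
    by (rule Liminf_bounded[OF ev])
  then show "0 < liminf (\<lambda>k. INF Y\<in>pyr_scale (t k) P. box_dist X Y)"
    using eps0 by (meson ereal_less(2) less_le_trans)
qed



lemma real_metric_borel: "metric_borel (UNIV::real set) dist = borel"
  unfolding metric_borel_def by (simp add: borel_def)

lemma real_metric: "Metric_space (UNIV::real set) dist"
  by (rule Met_TC.Metric_space_axioms)

lemma real_separable: "separable_space (euclidean :: real topology)"
  unfolding separable_space_def
  by (intro exI[of _ "\<rat>"]) (simp add: countable_rat Rats_closure_real euclidean_closure_of)

lemma real_mm_space:
  assumes "prob_space \<rho>" "sets \<rho> = sets (borel :: real measure)"
  shows "mm_space (UNIV, dist, \<rho>)"
  unfolding mm_space_def using assms
  by (simp add: real_metric real_metric_borel real_separable complete_UNIV)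

definition two_meas :: "real \<Rightarrow> real measure" where
  "two_meas p = point_measure {0, 1} (\<lambda>x. if x = 0 then ennreal p else ennreal (1 - p))"

definition two_pt :: "real \<Rightarrow> mm" where
  "two_pt p = ({0, 1}, dist, two_meas p)"

lemma two_metric: "Metric_space {0::real, 1} dist"
  by (rule Metric_space.subspace[OF real_metric]) simp

lemma two_sets_metric: "sets (metric_borel {0::real, 1} dist) = Pow {0, 1}"
proof -
  interpret Metric_space "{0::real, 1}" dist by (rule two_metric)
  have op: "openin mtopology U" if "U \<subseteq> {0, 1}" for U
    unfolding openin_mtopology
  proof (intro conjI allI impI)
    fix x assume x: "x \<in> U"
    show "\<exists>r>0. mball x r \<subseteq> U"
    proof (intro exI conjI)
      show "mball x (1/2) \<subseteq> U"
      proof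
        fix y assume "y \<in> mball x (1/2)"
        then have "y \<in> {0, 1}" "x \<in> {0,1}" "dist x y < 1/2" by auto
        then have "y = x" by (auto simp: dist_real_def)
        then show "y \<in> U" using x by simp
      qed
    qed simp
  qed (use that in auto)
  have G: "{U. openin mtopology U} \<subseteq> Pow {0, 1}" using openin_subset by fastforce
  have "sets (metric_borel {0::real, 1} dist) = sigma_sets {0, 1} {U. openin mtopology U}"
    unfolding metric_borel_def using G by (simp add: sets_measure_of_conv)
  also have "\<dots> = Pow {0, 1}"
  proof
    show "sigma_sets {0, 1} {U. openin mtopology U} \<subseteq> Pow {0::real, 1}"
      using sigma_sets_into_sp[OF G] by auto
    show "Pow {0::real, 1} \<subseteq> sigma_sets {0, 1} {U. openin mtopology U}"
      using op by (auto intro: sigma_sets.Basic)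
  qed
  finally show ?thesis .
qed

lemma two_meas_sets: "sets (two_meas p) = Pow {0, 1}"
  by (simp add: two_meas_def sets_point_measure)

lemma two_meas_space: "space (two_meas p) = {0, 1}"
  by (simp add: two_meas_def space_point_measure)

lemma two_meas_emeasure:
  assumes "0 \<le> p" "p \<le> 1"
  shows "emeasure (two_meas p) {0} = p" "emeasure (two_meas p) {1} = 1 - p"
  using assms by (simp_all add: two_meas_def emeasure_point_measure_finite)

lemma two_prob:
  assumes "0 \<le> p" "p \<le> 1"
  shows "prob_space (two_meas p)"
  unfolding two_meas_def using assms
  by (intro prob_space_point_measure) (auto simp flip: ennreal_plus)

lemma two_mm_space:
  assumes "0 \<le> p" "p \<le> 1"
  shows "mm_space (two_pt p)"
proof -
  interpret Metric_space "{0::real, 1}" dist by (rule two_metric)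
  have cs: "compact_space mtopology"
    unfolding compact_space_def by (rule finite_imp_compactin) auto
  have sep: "separable_space mtopology"
  proof -
    have "mtopology closure_of {0,1} = {0::real,1}" using closure_of_topspace[of mtopology] by simp
    then show ?thesis unfolding separable_space_def by (intro exI[of _ "{0, 1}"]) auto
  qed
  show ?thesis unfolding mm_space_def two_pt_def
    using two_metric compact_space_imp_mcomplete[OF cs] sep two_meas_sets two_sets_metric two_prob[OF assms]
    by simp
qed

lemma two_not_star:
  assumes "0 < p" "p < 1"
  shows "two_pt p \<notin> pyr_star"
proof
  assume "two_pt p \<in> pyr_star"
  then obtain x0 where "mm_meas (two_pt p) = return (mm_meas (two_pt p)) x0"
    using star_is_return by blast
  then have e: "two_meas p = return (two_meas p) x0" unfolding two_pt_def by simp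
  have "emeasure (two_meas p) {0} = indicator {0} x0"
    by (subst e) (simp add: two_meas_sets)
  then show False using two_meas_emeasure(1)[of p] assms
    by (cases "x0 = 0") auto
qed



lemma measure_times_prob:
  assumes "prob_space M" "prob_space N" "A \<in> sets M" "B \<in> sets N"
  shows "measure (M \<Otimes>\<^sub>M N) (A \<times> B) = measure M A * measure N B"
proof -
  interpret N: prob_space N by fact
  have "emeasure (M \<Otimes>\<^sub>M N) (A \<times> B) = emeasure M A * emeasure N B"
    using assms by (simp add: N.emeasure_pair_measure_Times)
  then show ?thesis unfolding measure_def by (simp add: enn2real_mult)
qed

definition unif :: "real measure" where "unif = uniform_measure lborel {0..1}"

lemma unif_prob: "prob_space unif"
  unfolding unif_def by (rule prob_space_uniform_measure) simp_all

lemma unif_sets: "sets unif = sets borel"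
  unfolding unif_def by simp

lemma unif_le: assumes "0 \<le> w" "w \<le> 1" shows "measure unif {..w} = w"
proof -
  have "{0..1} \<inter> {..w} = {0..w::real}" using assms by auto
  then show ?thesis unfolding unif_def measure_def using assms by (simp add: divide_ennreal_def)
qed

lemma unif_gt: assumes "0 \<le> w" "w \<le> 1" shows "measure unif {w<..} = 1 - w"
proof -
  have "{0..1} \<inter> {w<..} = {w<..1::real}" using assms by auto
  then show ?thesis unfolding unif_def measure_def using assms by (simp add: divide_ennreal_def)
qed



lemma box_two:
  fixes \<rho> :: "real measure" and a L p \<alpha> \<beta> :: real
  assumes \<rho>: "prob_space \<rho>" and s\<rho>: "sets \<rho> = sets borel" and L: "0 < L"
    and p: "0 < p" "p < 1" and al: "\<alpha> = measure \<rho> {a}" and be: "\<beta> = measure \<rho> {a + L}"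
    and a01: "0 < \<alpha>" "\<alpha> < 1"
  shows "box_dist (two_pt p) (mm_scale (1 / L) (UNIV, dist, \<rho>)) \<le> ereal (\<bar>p - \<alpha>\<bar> + (1 - \<alpha> - \<beta>))"
proof -
  interpret R: prob_space \<rho> by fact
  interpret U: prob_space unif by (rule unif_prob)
  define w0 where "w0 = (if p \<le> \<alpha> then p / \<alpha> else 1)"
  define w1 where "w1 = (if p \<le> \<alpha> then 0 else (p - \<alpha>) / (1 - \<alpha>))"
  have w0: "0 \<le> w0" "w0 \<le> 1" unfolding w0_def using p a01 by auto
  have w1: "0 \<le> w1" "w1 \<le> 1" unfolding w1_def using p a01 by (auto simp: field_simps)
  have wsum: "\<alpha> * w0 + (1 - \<alpha>) * w1 = p" unfolding w0_def w1_def using a01 by auto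
  define \<Omega> where "\<Omega> = \<rho> \<Otimes>\<^sub>M unif"
  interpret O: prob_space \<Omega> unfolding \<Omega>_def by (rule prob_space_pair[OF \<rho> unif_prob])
  have spR: "space \<rho> = UNIV" using sets_eq_imp_space_eq[OF s\<rho>] by simp
  have spU: "space unif = UNIV" using sets_eq_imp_space_eq[OF unif_sets] by simp
  have spO: "space \<Omega> = UNIV" unfolding \<Omega>_def by (simp add: space_pair_measure spR spU)
  have bR: "B \<in> sets \<rho>" if "B \<in> sets borel" for B using that s\<rho> by simp
  have bU: "B \<in> sets unif" if "B \<in> sets borel" for B using that unif_sets by simp
  have rect: "A \<times> B \<in> sets \<Omega>" if "A \<in> sets borel" "B \<in> sets borel" for A B
    unfolding \<Omega>_def using bR[OF that(1)] bU[OF that(2)] by (rule pair_measureI)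
  have mrect: "measure \<Omega> (A \<times> B) = measure \<rho> A * measure unif B" if "A \<in> sets borel" "B \<in> sets borel" for A B
    unfolding \<Omega>_def by (rule measure_times_prob[OF \<rho> unif_prob bR[OF that(1)] bU[OF that(2)]])
  have ca: "measure \<rho> (- {a}) = 1 - \<alpha>"
    using R.prob_compl[OF bR[of "{a}"]] al spR by (simp add: Compl_eq_Diff_UNIV)
  define E0 where "E0 = {a} \<times> {..w0} \<union> (- {a}) \<times> {..w1}"
  have E0s: "E0 \<in> sets \<Omega>" unfolding E0_def by (intro sets.Un rect) auto
  have mE0: "measure \<Omega> E0 = p"
  proof -
    have "measure \<Omega> E0 = measure \<Omega> ({a} \<times> {..w0}) + measure \<Omega> ((- {a}) \<times> {..w1})"
      unfolding E0_def by (rule O.finite_measure_Union) (auto intro!: rect)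
    also have "\<dots> = \<alpha> * w0 + (1 - \<alpha>) * w1"
      using mrect[of "{a}" "{..w0}"] mrect[of "- {a}" "{..w1}"] unif_le w0 w1 al ca by simp
    finally show ?thesis using wsum by simp
  qed
  have mE1: "measure \<Omega> (- E0) = 1 - p"
    using O.prob_compl[OF E0s] mE0 spO by (simp add: Compl_eq_Diff_UNIV)
  define g where "g \<omega> = (if \<omega> \<in> E0 then 0 else 1 :: real)" for \<omega>
  have sT: "sets (two_meas p) = sets (count_space {0, 1})" by (simp add: two_meas_sets)
  have gm: "g \<in> measurable \<Omega> (two_meas p)"
    unfolding measurable_cong_sets[OF refl sT]
  proof (subst measurable_count_space_eq2, simp, intro conjI ballI)
    show "g \<in> space \<Omega> \<rightarrow> {0, 1}" unfolding g_def by auto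
    fix v :: real assume "v \<in> {0, 1}"
    then have "g -` {v} \<inter> space \<Omega> = E0 \<or> g -` {v} \<inter> space \<Omega> = - E0"
      unfolding g_def spO by auto
    moreover have "- E0 \<in> sets \<Omega>" using sets.compl_sets[OF E0s] spO by (simp add: Compl_eq_Diff_UNIV)
    ultimately show "g -` {v} \<inter> space \<Omega> \<in> sets \<Omega>" using E0s by auto
  qed
  define H where "H \<omega> = (g \<omega>, fst \<omega>)" for \<omega>
  have fm: "fst \<in> measurable \<Omega> \<rho>" unfolding \<Omega>_def by simp
  have Hm: "H \<in> measurable \<Omega> (two_meas p \<Otimes>\<^sub>M \<rho>)" unfolding H_def
    using measurable_Pair[OF gm fm] by simp
  define \<pi> where "\<pi> = distr \<Omega> (two_meas p \<Otimes>\<^sub>M \<rho>) H"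
  have cpl: "\<pi> \<in> couplings (mm_meas (two_pt p)) (mm_meas (mm_scale (1 / L) (UNIV, dist, \<rho>)))"
    unfolding couplings_def two_pt_def scale_meas mm_tuple
  proof (intro CollectI conjI)
    show "sets \<pi> = sets (two_meas p \<Otimes>\<^sub>M \<rho>)" unfolding \<pi>_def by simp
    show "prob_space \<pi>" unfolding \<pi>_def by (rule O.prob_space_distr[OF Hm])
    have "distr \<pi> (two_meas p) fst = distr \<Omega> (two_meas p) (fst \<circ> H)"
      unfolding \<pi>_def by (rule distr_distr[OF measurable_fst Hm])
    also have "fst \<circ> H = g" unfolding H_def by auto
    also have "distr \<Omega> (two_meas p) g = two_meas p"
    proof (rule measure_eqI_finite[of _ "{0, 1}"])
      show "sets (distr \<Omega> (two_meas p) g) = Pow {0, 1}" by (simp add: two_meas_sets)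
      show "sets (two_meas p) = Pow {0, 1}" by (simp add: two_meas_sets)
      fix v :: real assume v: "v \<in> {0, 1}"
      have e0: "g -` {0} \<inter> space \<Omega> = E0" unfolding g_def spO by auto
      have e1: "g -` {1} \<inter> space \<Omega> = - E0" unfolding g_def spO by auto
      show "emeasure (distr \<Omega> (two_meas p) g) {v} = emeasure (two_meas p) {v}"
        using v p
        by (auto simp: emeasure_distr[OF gm] two_meas_sets e0 e1 two_meas_emeasure
              O.emeasure_eq_measure mE0 mE1 E0s)
    qed simp
    finally show "distr \<pi> (two_meas p) fst = two_meas p" .
    have "distr \<pi> \<rho> snd = distr \<Omega> \<rho> (snd \<circ> H)"
      unfolding \<pi>_def by (rule distr_distr[OF measurable_snd Hm])
    also have "snd \<circ> H = fst" unfolding H_def by auto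
    also have "distr \<Omega> \<rho> fst = \<rho>" unfolding \<Omega>_def by (rule U.distr_pair_fst)
    finally show "distr \<pi> \<rho> snd = \<rho>" .
  qed
  define S where "S = {(0::real, a), (1, a + L)}"
  have Ss: "S \<in> sets (mm_meas (two_pt p) \<Otimes>\<^sub>M mm_meas (mm_scale (1 / L) (UNIV, dist, \<rho>)))"
  proof -
    have "S = {0} \<times> {a} \<union> {1} \<times> {a + L}" unfolding S_def by auto
    moreover have "{0} \<times> {a} \<in> sets (two_meas p \<Otimes>\<^sub>M \<rho>)" "{1} \<times> {a + L} \<in> sets (two_meas p \<Otimes>\<^sub>M \<rho>)"
      by (rule pair_measureI, simp add: two_meas_sets, simp add: s\<rho>)+
    ultimately have "S \<in> sets (two_meas p \<Otimes>\<^sub>M \<rho>)" by (metis sets.Un)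
    then show ?thesis unfolding two_pt_def by simp
  qed
  have Sv: "H -` S \<inter> space \<Omega> = {a} \<times> {..w0} \<union> {a + L} \<times> {w1<..}"
    unfolding S_def H_def g_def E0_def spO using L by (auto split: if_splits)
  have mS: "measure \<pi> S = \<alpha> * w0 + \<beta> * (1 - w1)"
  proof -
    have Ss': "S \<in> sets (two_meas p \<Otimes>\<^sub>M \<rho>)" using Ss unfolding two_pt_def by simp
    have "measure \<pi> S = measure \<Omega> (H -` S \<inter> space \<Omega>)"
      unfolding \<pi>_def by (rule measure_distr[OF Hm Ss'])
    also have "\<dots> = measure \<Omega> ({a} \<times> {..w0}) + measure \<Omega> ({a + L} \<times> {w1<..})"
      unfolding Sv by (rule O.finite_measure_Union) (use L in \<open>auto intro!: rect\<close>)
    also have "\<dots> = \<alpha> * w0 + \<beta> * (1 - w1)"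
      using mrect[of "{a}" "{..w0}"] mrect[of "{a + L}" "{w1<..}"] unif_le unif_gt w0 w1 al be by simp
    finally show ?thesis .
  qed
  have dis: "distortion (two_pt p) (mm_scale (1 / L) (UNIV, dist, \<rho>)) S \<le> 0"
    unfolding distortion_def
  proof (intro SUP_least)
    fix u v assume "u \<in> S" "v \<in> S"
    then show "ereal \<bar>mm_dist (two_pt p) (fst u) (fst v) -
        mm_dist (mm_scale (1 / L) (UNIV, dist, \<rho>)) (snd u) (snd v)\<bar> \<le> 0"
      unfolding S_def two_pt_def using L by (auto simp: dist_real_def)
  qed
  have ab: "\<alpha> + \<beta> \<le> 1"
  proof -
    have "measure \<rho> ({a} \<union> {a + L}) = \<alpha> + \<beta>"
      using R.finite_measure_Union[of "{a}" "{a + L}"] L al be by (simp add: bR)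
    then show ?thesis using R.prob_le_1[of "{a} \<union> {a + L}"] by simp
  qed
  have b0: "0 \<le> \<beta>" using be by simp
  have key: "1 - measure \<pi> S \<le> \<bar>p - \<alpha>\<bar> + (1 - \<alpha> - \<beta>)"
  proof (cases "p \<le> \<alpha>")
    case True
    then show ?thesis unfolding mS w0_def w1_def using a01 by simp
  next
    case False
    have "\<beta> * ((p - \<alpha>) / (1 - \<alpha>)) \<le> p - \<alpha>"
    proof -
      have "\<beta> * ((p - \<alpha>) / (1 - \<alpha>)) = (p - \<alpha>) * (\<beta> / (1 - \<alpha>))" by simp
      also have "\<dots> \<le> (p - \<alpha>) * 1"
        using False ab a01 b0 by (intro mult_left_mono) (auto simp: field_simps)
      finally show ?thesis by simp
    qed
    then show ?thesis unfolding mS w0_def w1_def using False by (simp add: right_diff_distrib)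
  qed
  have "box_dist (two_pt p) (mm_scale (1 / L) (UNIV, dist, \<rho>))
      \<le> max (distortion (two_pt p) (mm_scale (1 / L) (UNIV, dist, \<rho>)) S) (ereal (1 - measure \<pi> S))"
    unfolding box_dist_def by (rule INF_lower2[OF cpl], rule INF_lower2[OF Ss]) simp
  also have "\<dots> \<le> ereal (\<bar>p - \<alpha>\<bar> + (1 - \<alpha> - \<beta>))"
  proof (rule max.boundedI)
    have "0 \<le> \<bar>p - \<alpha>\<bar> + (1 - \<alpha> - \<beta>)" using ab by simp
    then show "distortion (two_pt p) (mm_scale (1 / L) (UNIV, dist, \<rho>)) S \<le> ereal (\<bar>p - \<alpha>\<bar> + (1 - \<alpha> - \<beta>))"
      using dis by (meson order_trans ereal_less_eq(5))
    show "ereal (1 - measure \<pi> S) \<le> ereal (\<bar>p - \<alpha>\<bar> + (1 - \<alpha> - \<beta>))" using key by simp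
  qed
  finally show ?thesis .
qed



lemma gap:
  fixes \<nu> :: "real measure" and R kap :: real and N :: nat
  assumes \<nu>: "prob_space \<nu>" "sets \<nu> = sets borel" and kap: "0 < kap" "kap < 1"
    and R: "0 < R" and N: "1 \<le> N" and pd: "ereal R < partial_diam \<nu> kap"
  shows "\<exists>a. kap / 3 \<le> measure \<nu> {..a} \<and> kap / 3 \<le> measure \<nu> {a + R / (2 * N)..} \<and>
             measure \<nu> {a<..<a + R / (2 * N)} \<le> 1 / N"
proof -
  interpret real_distribution \<nu> using \<nu> by (simp add: real_distribution_def real_distribution_axioms_def)
  define F where "F = cdf \<nu>"
  define S where "S = {x. kap / 3 \<le> F x}"
  have "eventually (\<lambda>x. kap / 3 < F x) at_top"
    using order_tendstoD(1)[OF cdf_lim_at_top_prob, of "kap/3"] kap unfolding F_def by simp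
  then obtain x1 where "kap / 3 < F x1" by (auto simp: eventually_at_top_linorder)
  then have Sne: "S \<noteq> {}" unfolding S_def by (metis empty_iff less_eq_real_def mem_Collect_eq)
  have "eventually (\<lambda>x. F x < kap / 3) at_bot"
    using order_tendstoD(2)[OF cdf_lim_at_bot, of "kap/3"] kap unfolding F_def by simp
  then obtain b where b: "\<And>x. x \<le> b \<Longrightarrow> F x < kap / 3" by (auto simp: eventually_at_bot_linorder)
  have Sbdd: "bdd_below S"
  proof (rule bdd_belowI)
    fix s assume "s \<in> S"
    then show "b \<le> s" using b[of s] unfolding S_def by force
  qed
  define x0 where "x0 = Inf S"
  have Fx0: "kap / 3 \<le> F x0"
  proof -
    have "(F \<longlongrightarrow> F x0) (at_right x0)"
      using cdf_is_right_cont[of x0] unfolding F_def continuous_within by simp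
    moreover have "eventually (\<lambda>y. kap / 3 \<le> F y) (at_right x0)"
      using eventually_at_right_less[of x0]
    proof (rule eventually_mono)
      fix y assume "x0 < y"
      then obtain s where s: "s \<in> S" "s < y" using cInf_less_iff[OF Sne Sbdd] unfolding x0_def by blast
      then show "kap / 3 \<le> F y" unfolding S_def F_def using cdf_nondecreasing[of s y] by auto
    qed
    ultimately show ?thesis by (rule tendsto_lowerbound) simp
  qed
  have below: "F y < kap / 3" if "y < x0" for y
  proof (rule ccontr)
    assume "\<not> F y < kap / 3"
    then have "y \<in> S" unfolding S_def by simp
    then have "x0 \<le> y" unfolding x0_def by (rule cInf_lower[OF _ Sbdd])
    then show False using that by simp
  qed
  define R' where "R' = R / 2"
  have R'0: "0 < R'" unfolding R'_def using R by simp
  have right: "kap / 3 \<le> measure \<nu> {x0 + R'..}"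
  proof (rule ccontr)
    assume H: "\<not> ?thesis"
    define A where "A = {x0 - R'<..<x0 + R'}"
    have "measure \<nu> A = 1 - F (x0 - R') - measure \<nu> {x0 + R'..}"
    proof -
      have "measure \<nu> ({..x0 - R'} \<union> A) = measure \<nu> {..x0 - R'} + measure \<nu> A"
        by (rule finite_measure_Union) (auto simp: A_def)
      moreover have "measure \<nu> (({..x0 - R'} \<union> A) \<union> {x0 + R'..}) = measure \<nu> ({..x0 - R'} \<union> A) + measure \<nu> {x0 + R'..}"
        by (rule finite_measure_Union) (use R'0 in \<open>auto simp: A_def\<close>)
      moreover have "({..x0 - R'} \<union> A) \<union> {x0 + R'..} = UNIV" unfolding A_def by auto
      ultimately show ?thesis unfolding F_def cdf_def using prob_space by simp
    qed
    moreover have "F (x0 - R') < kap / 3" using below R'0 by simp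
    ultimately have mA: "1 - kap \<le> measure \<nu> A" using H kap by linarith
    have "partial_diam \<nu> kap \<le> (SUP x\<in>A. SUP y\<in>A. ereal \<bar>x - y\<bar>)"
      unfolding partial_diam_def by (rule INF_lower) (use mA in \<open>simp add: A_def\<close>)
    also have "\<dots> \<le> ereal R"
    proof (intro SUP_least)
      fix x y assume "x \<in> A" "y \<in> A"
      then show "ereal \<bar>x - y\<bar> \<le> ereal R" unfolding A_def R'_def by auto
    qed
    finally show False using pd by simp
  qed
  define L where "L = R' / N"
  have L0: "0 < L" unfolding L_def using R'0 N by simp
  have NL: "real N * L = R'" unfolding L_def using N by simp
  define D where "D j = F (x0 + real (Suc j) * L) - F (x0 + real j * L)" for j
  have "\<exists>j<N. D j \<le> 1 / N"
  proof (rule ccontr)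
    assume "\<not> ?thesis"
    then have "\<forall>j\<in>{..<N}. 1 / N < D j" by auto
    then have "(\<Sum>j<N. 1 / real N) < (\<Sum>j<N. D j)"
      using N by (intro sum_strict_mono) (auto simp: lessThan_empty_iff)
    moreover have "(\<Sum>j<N. D j) = F (x0 + real N * L) - F x0"
      unfolding D_def using sum_lessThan_telescope[of "\<lambda>j. F (x0 + real j * L)" N] by simp
    moreover have "F (x0 + real N * L) \<le> 1" unfolding F_def by (rule cdf_bounded_prob)
    moreover have "0 \<le> F x0" unfolding F_def by (rule cdf_nonneg)
    ultimately show False using N by simp
  qed
  then obtain j where j: "j < N" "D j \<le> 1 / N" by blast
  define a where "a = x0 + real j * L"
  have aL: "a + L = x0 + real (Suc j) * L" unfolding a_def by (simp add: algebra_simps)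
  have "kap / 3 \<le> measure \<nu> {..a}"
  proof -
    have "F x0 \<le> F a" unfolding a_def F_def using L0 by (intro cdf_nondecreasing) simp
    then show ?thesis using Fx0 unfolding F_def cdf_def by simp
  qed
  moreover have "kap / 3 \<le> measure \<nu> {a + L..}"
  proof -
    have "a + L \<le> x0 + R'" unfolding aL NL[symmetric] using j(1) L0
      by (intro add_left_mono mult_right_mono) auto
    then have "measure \<nu> {x0 + R'..} \<le> measure \<nu> {a + L..}" by (intro finite_measure_mono) auto
    then show ?thesis using right by simp
  qed
  moreover have "measure \<nu> {a<..<a + L} \<le> 1 / N"
  proof -
    have "measure \<nu> {a<..<a + L} \<le> measure \<nu> {a<..a + L}" by (intro finite_measure_mono) auto
    also have "\<dots> = F (a + L) - F a" unfolding F_def using L0 by (simp add: cdf_diff_eq)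
    also have "\<dots> = D j" unfolding D_def aL[symmetric] a_def ..
    finally show ?thesis using j(2) by simp
  qed
  moreover have "L = R / (2 * N)" unfolding L_def R'_def by simp
  ultimately show ?thesis by metis
qed



lemma real_image_in_P:
  assumes P: "pyramid P" and Y0: "Y0 \<in> P"
    and F: "\<And>x x'. x \<in> mm_carrier Y0 \<Longrightarrow> x' \<in> mm_carrier Y0 \<Longrightarrow> \<bar>F x - F x'\<bar> \<le> mm_dist Y0 x x'"
  shows "(UNIV, dist, distr (mm_meas Y0) borel F) \<in> P"
proof -
  have Y0s: "mm_space Y0" using Y0 P unfolding pyramid_def by auto
  have Fm: "F \<in> borel_measurable (mm_meas Y0)" by (rule lip_meas[OF Y0s F])
  interpret prob_space "mm_meas Y0" using mm_space_prob[OF Y0s] .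
  have Ys: "mm_space (UNIV, dist, distr (mm_meas Y0) borel F)"
    by (rule real_mm_space) (simp_all add: prob_space_distr[OF Fm])
  have "mm_dominated (UNIV, dist, distr (mm_meas Y0) borel F) Y0"
    unfolding mm_dominated_def mm_tuple
  proof (intro exI[of _ F] conjI)
    show "F \<in> mm_carrier Y0 \<rightarrow> UNIV" by simp
    show "\<forall>x\<in>mm_carrier Y0. \<forall>x'\<in>mm_carrier Y0. dist (F x) (F x') \<le> mm_dist Y0 x x'"
      using F by (simp add: dist_real_def)
    show "F \<in> measurable (mm_meas Y0) (distr (mm_meas Y0) borel F)"
      using Fm by simp
    show "distr (mm_meas Y0) (distr (mm_meas Y0) borel F) F = distr (mm_meas Y0) borel F"
      by (rule distr_cong) simp_all
  qed
  moreover have "\<forall>X\<in>P. \<forall>Y. mm_space Y \<and> mm_dominated Y X \<longrightarrow> Y \<in> P" using P unfolding pyramid_def by blast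
  ultimately show ?thesis using Y0 Ys by blast
qed

lemma clamp_lip: "\<bar>max a (min b x) - max a (min b y)\<bar> \<le> \<bar>x - y :: real\<bar>"
  unfolding max_def min_def by (auto simp: abs_if)

lemma per_k:
  assumes P: "pyramid P" and inf: "obs_diam_pyr P kap = \<infinity>" and kap: "0 < kap" "kap < 1"
  shows "\<exists>Y\<in>P. \<exists>\<alpha>. kap / 3 \<le> \<alpha> \<and> \<alpha> \<le> 1 - kap / 3 \<and>
     (\<forall>p. 0 < p \<and> p < 1 \<longrightarrow>
        box_dist (two_pt p) (mm_scale (1 / (real k + 1)) Y) \<le> ereal (\<bar>p - \<alpha>\<bar> + 1 / (real k + 1)))"
proof -
  define N :: nat where "N = Suc k"
  define R :: real where "R = 2 * real N * real N"
  have R0: "0 < R" unfolding R_def N_def by simp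
  have "ereal R < obs_diam_pyr P kap" using inf by simp
  then obtain Y0 where Y0: "Y0 \<in> P" and "ereal R < obs_diam Y0 kap"
    unfolding obs_diam_pyr_def less_SUP_iff by blast
  then obtain f where f: "\<And>x x'. x \<in> mm_carrier Y0 \<Longrightarrow> x' \<in> mm_carrier Y0 \<Longrightarrow> \<bar>f x - f x'\<bar> \<le> mm_dist Y0 x x'"
    and pdf: "ereal R < partial_diam (distr (mm_meas Y0) borel f) kap"
    unfolding obs_diam_def less_SUP_iff by blast
  have Y0s: "mm_space Y0" using Y0 P unfolding pyramid_def by auto
  interpret M0: prob_space "mm_meas Y0" using mm_space_prob[OF Y0s] .
  have fm: "f \<in> borel_measurable (mm_meas Y0)" by (rule lip_meas[OF Y0s f])
  define \<nu> where "\<nu> = distr (mm_meas Y0) borel f"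
  have \<nu>p: "prob_space \<nu>" unfolding \<nu>_def by (rule M0.prob_space_distr[OF fm])
  interpret NU: prob_space \<nu> by (rule \<nu>p)
  have \<nu>s: "sets \<nu> = sets borel" unfolding \<nu>_def by simp
  have N1: "1 \<le> N" unfolding N_def by simp
  obtain a where a1: "kap / 3 \<le> measure \<nu> {..a}" and a2: "kap / 3 \<le> measure \<nu> {a + R / (2 * N)..}"
    and a3: "measure \<nu> {a<..<a + R / (2 * N)} \<le> 1 / N"
    using gap[OF \<nu>p \<nu>s kap R0 N1] pdf unfolding \<nu>_def by blast
  define L where "L = real k + 1"
  have LR: "R / (2 * N) = L" unfolding L_def R_def N_def by simp
  have L0: "0 < L" unfolding L_def by simp
  define G where "G x = max a (min (a + L) (f x))" for x
  have G: "\<bar>G x - G x'\<bar> \<le> mm_dist Y0 x x'" if "x \<in> mm_carrier Y0" "x' \<in> mm_carrier Y0" for x x'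
    unfolding G_def using clamp_lip[of a "a + L" "f x" "f x'"] f[OF that] by linarith
  have Gm: "G \<in> borel_measurable (mm_meas Y0)" by (rule lip_meas[OF Y0s G])
  define \<rho> where "\<rho> = distr (mm_meas Y0) borel G"
  define Y where "Y = (UNIV :: real set, dist :: real \<Rightarrow> real \<Rightarrow> real, \<rho>)"
  have YP: "Y \<in> P" unfolding Y_def \<rho>_def by (rule real_image_in_P[OF P Y0 G])
  have \<rho>p: "prob_space \<rho>" unfolding \<rho>_def by (rule M0.prob_space_distr[OF Gm])
  have \<rho>s: "sets \<rho> = sets borel" unfolding \<rho>_def by simp
  define \<alpha> where "\<alpha> = measure \<rho> {a}"
  define \<beta> where "\<beta> = measure \<rho> {a + L}"
  have al: "\<alpha> = measure \<nu> {..a}"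
  proof -
    have "G -` {a} \<inter> space (mm_meas Y0) = f -` {..a} \<inter> space (mm_meas Y0)"
      unfolding G_def using L0 by (auto simp: max_def min_def split: if_splits)
    then show ?thesis unfolding \<alpha>_def \<rho>_def \<nu>_def
      by (simp add: measure_distr[OF Gm] measure_distr[OF fm])
  qed
  have be: "\<beta> = measure \<nu> {a + L..}"
  proof -
    have "G -` {a + L} \<inter> space (mm_meas Y0) = f -` {a + L..} \<inter> space (mm_meas Y0)"
      unfolding G_def using L0 by (auto simp: max_def min_def split: if_splits)
    then show ?thesis unfolding \<beta>_def \<rho>_def \<nu>_def
      by (simp add: measure_distr[OF Gm] measure_distr[OF fm])
  qed
  have part: "measure \<nu> {..a} + measure \<nu> {a<..<a + L} + measure \<nu> {a + L..} = 1"
  proof -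
    have "measure \<nu> ({..a} \<union> {a<..<a + L}) = measure \<nu> {..a} + measure \<nu> {a<..<a + L}"
      by (rule NU.finite_measure_Union) (auto simp: \<nu>s)
    moreover have "measure \<nu> (({..a} \<union> {a<..<a + L}) \<union> {a + L..}) = measure \<nu> ({..a} \<union> {a<..<a + L}) + measure \<nu> {a + L..}"
      by (rule NU.finite_measure_Union) (use L0 in \<open>auto simp: \<nu>s\<close>)
    moreover have "({..a} \<union> {a<..<a + L}) \<union> {a + L..} = UNIV" by auto
    moreover have "space \<nu> = UNIV" using sets_eq_imp_space_eq[OF \<nu>s] by simp
    ultimately show ?thesis using NU.prob_space by simp
  qed
  have a3': "measure \<nu> {a<..<a + L} \<le> 1 / real N" using a3 unfolding LR .
  have mid: "1 - \<alpha> - \<beta> \<le> 1 / (real k + 1)"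
    using part a3' unfolding al be N_def by (simp add: add.commute)
  have \<alpha>1: "kap / 3 \<le> \<alpha>" using a1 al by simp
  have \<beta>1: "kap / 3 \<le> \<beta>" using a2 be LR by simp
  have \<alpha>2: "\<alpha> \<le> 1 - kap / 3" using part \<beta>1 al be measure_nonneg[of \<nu> "{a<..<a + L}"] by linarith
  have box: "box_dist (two_pt p) (mm_scale (1 / (real k + 1)) Y) \<le> ereal (\<bar>p - \<alpha>\<bar> + 1 / (real k + 1))"
    if p: "0 < p" "p < 1" for p
  proof -
    have "box_dist (two_pt p) (mm_scale (1 / L) (UNIV, dist, \<rho>)) \<le> ereal (\<bar>p - \<alpha>\<bar> + (1 - \<alpha> - \<beta>))"
      by (rule box_two[OF \<rho>p \<rho>s L0 p \<alpha>_def \<beta>_def]) (use \<alpha>1 \<alpha>2 kap in auto)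
    also have "\<dots> \<le> ereal (\<bar>p - \<alpha>\<bar> + 1 / (real k + 1))" using mid by simp
    finally show ?thesis unfolding Y_def L_def .
  qed
  show ?thesis using YP \<alpha>1 \<alpha>2 box by blast
qed



lemma dirB:
  assumes P: "pyramid P" and nf: "\<not> obs_diam_finite P"
  shows "\<exists>t :: nat \<Rightarrow> real. (\<forall>k. 0 < t k) \<and> t \<longlonglongrightarrow> 0 \<and> \<not> pyr_weak_conv (\<lambda>k. pyr_scale (t k) P) pyr_star"
proof -
  obtain kap where kap: "0 < kap" "kap < 1" and ni: "\<not> obs_diam_pyr P kap < \<infinity>"
    using nf unfolding obs_diam_finite_def by blast
  have inf: "obs_diam_pyr P kap = \<infinity>" using ni by (simp add: top.not_eq_extremum)
  have "\<forall>k. \<exists>Y\<in>P. \<exists>\<alpha>. kap / 3 \<le> \<alpha> \<and> \<alpha> \<le> 1 - kap / 3 \<and>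
     (\<forall>p. 0 < p \<and> p < 1 \<longrightarrow>
        box_dist (two_pt p) (mm_scale (1 / (real k + 1)) Y) \<le> ereal (\<bar>p - \<alpha>\<bar> + 1 / (real k + 1)))"
    using per_k[OF P inf kap] by blast
  then obtain Yf \<alpha>f where Yf: "\<And>k. Yf k \<in> P" and \<alpha>f: "\<And>k. kap / 3 \<le> \<alpha>f k" "\<And>k. \<alpha>f k \<le> 1 - kap / 3"
    and bd: "\<And>k p. 0 < p \<Longrightarrow> p < 1 \<Longrightarrow>
        box_dist (two_pt p) (mm_scale (1 / (real k + 1)) (Yf k)) \<le> ereal (\<bar>p - \<alpha>f k\<bar> + 1 / (real k + 1))"
    by metis
  have "\<forall>k. \<alpha>f k \<in> {kap / 3 .. 1 - kap / 3}" using \<alpha>f by auto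
  then obtain p r where p: "p \<in> {kap / 3 .. 1 - kap / 3}" and r: "strict_mono r" and lim: "(\<alpha>f \<circ> r) \<longlonglongrightarrow> p"
    using seq_compactE[OF compact_imp_seq_compact[OF compact_Icc]] by metis
  have p01: "0 < p" "p < 1" using p kap by auto
  define t where "t k = 1 / (real (r k) + 1)" for k
  have tpos: "\<forall>k. 0 < t k" unfolding t_def by simp
  have "(\<lambda>n. 1 / (real n + 1)) \<longlonglongrightarrow> 0"
    using LIMSEQ_inverse_real_of_nat by (simp add: inverse_eq_divide add.commute)
  then have tlim: "t \<longlonglongrightarrow> 0" using LIMSEQ_subseq_LIMSEQ[OF _ r] unfolding t_def comp_def by blast
  define e where "e k = \<bar>p - \<alpha>f (r k)\<bar> + t k" for k
  have "(\<lambda>k. \<alpha>f (r k)) \<longlonglongrightarrow> p" using lim unfolding comp_def .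
  then have "(\<lambda>k. p - \<alpha>f (r k)) \<longlonglongrightarrow> p - p" by (intro tendsto_diff tendsto_const)
  then have "(\<lambda>k. \<bar>p - \<alpha>f (r k)\<bar>) \<longlonglongrightarrow> \<bar>p - p\<bar>" by (rule tendsto_rabs)
  then have "e \<longlonglongrightarrow> 0 + 0" unfolding e_def using tlim by (intro tendsto_add) simp_all
  then have elim: "(\<lambda>k. ereal (e k)) \<longlonglongrightarrow> ereal 0" by (intro tendsto_ereal) simp
  have le: "(INF Y\<in>pyr_scale (t k) P. box_dist (two_pt p) Y) \<le> ereal (e k)" for k
  proof -
    have "mm_scale (t k) (Yf (r k)) \<in> pyr_scale (t k) P" unfolding pyr_scale_def using Yf by simp
    moreover have "box_dist (two_pt p) (mm_scale (t k) (Yf (r k))) \<le> ereal (e k)"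
      unfolding t_def e_def using bd[OF p01, of "r k"] by simp
    ultimately show ?thesis by (meson INF_lower2)
  qed
  have "liminf (\<lambda>k. INF Y\<in>pyr_scale (t k) P. box_dist (two_pt p) Y) \<le> liminf (\<lambda>k. ereal (e k))"
    by (rule Liminf_mono) (simp add: le)
  also have "liminf (\<lambda>k. ereal (e k)) = ereal 0" by (rule lim_imp_Liminf[OF _ elim]) simp
  finally have "\<not> 0 < liminf (\<lambda>k. INF Y\<in>pyr_scale (t k) P. box_dist (two_pt p) Y)" using zero_ereal_def not_less by metis
  moreover have "mm_space (two_pt p)" using p01 by (intro two_mm_space) auto
  moreover have "two_pt p \<notin> pyr_star" using p01 by (rule two_not_star)
  ultimately have "\<not> pyr_weak_conv (\<lambda>k. pyr_scale (t k) P) pyr_star"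
    unfolding pyr_weak_conv_def by blast
  then show ?thesis using tpos tlim by blast
qed

theorem lemma5p6:
  assumes "pyramid P"
  shows "obs_diam_finite P \<longleftrightarrow>
    (\<forall>t :: nat \<Rightarrow> real. (\<forall>k. 0 < t k) \<and> t \<longlonglongrightarrow> 0 \<longrightarrow>
       pyr_weak_conv (\<lambda>k. pyr_scale (t k) P) pyr_star)"
proof
  assume "obs_diam_finite P"
  then show "\<forall>t :: nat \<Rightarrow> real. (\<forall>k. 0 < t k) \<and> t \<longlonglongrightarrow> 0 \<longrightarrow>
       pyr_weak_conv (\<lambda>k. pyr_scale (t k) P) pyr_star"
    using dirA[OF assms] by blast
next
  assume H: "\<forall>t :: nat \<Rightarrow> real. (\<forall>k. 0 < t k) \<and> t \<longlonglongrightarrow> 0 \<longrightarrow>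
       pyr_weak_conv (\<lambda>k. pyr_scale (t k) P) pyr_star"
  show "obs_diam_finite P"
  proof (rule ccontr)
    assume "\<not> obs_diam_finite P"
    then show False using dirB[OF assms] H by blast
  qed
qed

end
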